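(* Let $\nu\in\mathbb{R}$, $\beta^1>\beta^2>\beta^3>0$, and let $\mathcal H_0=-\sqrt{\beta^1\beta^2\beta^3}\,\alpha_0$, $\mathcal N=\frac1{\beta^1}+\frac1{\beta^2}+\frac1{\beta^3}-\nu+2\alpha_0$. The reciprocal transformation $dx=\mathcal H_0\,dy+\mathcal N\,d\tau_-$, $dt=d\tau_-$ transforms the Whitham equations of the first negative KdV flow $$\partial_{\tau_-}\beta^i+v^i(\boldsymbol\beta)\partial_y\beta^i=0,\qquad v^i=\frac{2}{\sqrt{\beta^1\beta^2\beta^3}}\left(1-\frac{\prod_{j\ne i}(\beta^i-\beta^j)}{\beta^i(\beta^i+\alpha_1)}\right),$$ into the Camassa--Holm Whitham equations $$\partial_t\beta^i+\tilde C^i(\boldsymbol\beta)\partial_x\beta^i=0,\qquad \tilde C^i(\boldsymbol\beta)=\frac1{\beta^1}+\frac1{\beta^2}+\frac1{\beta^3}-\nu+2\frac{\alpha_0\prod_{j\ne i}(\beta^i-\beta^j)}{\beta^i(\beta^i+\alpha_1)},$$ $i=1,2,3$. Conversely, the inverse reciprocal transformation $dy=\frac1{\mathcal H_0}dx-\frac{\mathcal N}{\mathcal H_0}dt$, $d\tau_-=dt$, transforms the second system into the first.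
   Context: $a$ is a closed cycle on $w^2=(\eta-\beta^1)(\eta-\beta^2)(\eta-\beta^3)$ encircling $[\beta^2,\beta^1]$; $\alpha_1$ and $\alpha_0$ are defined by $\oint_a\frac{(\eta+\alpha_1)d\eta}{w}=0$ and $\oint_a\frac{(1/\eta+\alpha_0)d\eta}{w}=0$. The variables $\beta^i=1/(u^i+\nu)$, where $u^1<u^2<u^3$ are the Riemann invariants of the Camassa--Holm one-phase Whitham equations; in these variables the CH Whitham speeds are the $\tilde C^i$ above. The statement means: if $\boldsymbol\beta(y,\tau_-)$ solves the first system and $(x,t)$ are defined by integrating $dx=\mathcal H_0dy+\mathcal Nd\tau_-$, $dt=d\tau_-$, then $\boldsymbol\beta$ as a function of $(x,t)$ solves the second, and vice versa. *)

theory Defs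
  imports "HOL-Analysis.Analysis"
begin

definition admissible :: "real^3 \<Rightarrow> bool" where
  "admissible b \<longleftrightarrow> b$1 > b$2 \<and> b$2 > b$3 \<and> b$3 > 0"

definition Pw :: "real^3 \<Rightarrow> real \<Rightarrow> real" where
  "Pw b \<eta> = (\<eta> - b$1) * (\<eta> - b$2) * (\<eta> - b$3)"

text \<open>On the cycle a encircling [beta2, beta1], w = i sqrt|Pw| (up to the sheet) and the
  cycle integral of f(eta) d eta / w equals a nonzero constant times the real integral of
  f / sqrt|Pw| over [beta2, beta1]; hence the normalisation conditions read as follows.\<close>
definition alpha1 :: "real^3 \<Rightarrow> real" where
  "alpha1 b = (THE a. integral {b$2..b$1} (\<lambda>\<eta>. (\<eta> + a) / sqrt \<bar>Pw b \<eta>\<bar>) = 0)"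

definition alpha0 :: "real^3 \<Rightarrow> real" where
  "alpha0 b = (THE a. integral {b$2..b$1} (\<lambda>\<eta>. (1 / \<eta> + a) / sqrt \<bar>Pw b \<eta>\<bar>) = 0)"

definition H0 :: "real^3 \<Rightarrow> real" where
  "H0 b = - sqrt (b$1 * b$2 * b$3) * alpha0 b"

definition NN :: "real \<Rightarrow> real^3 \<Rightarrow> real" where
  "NN \<nu> b = 1 / b$1 + 1 / b$2 + 1 / b$3 - \<nu> + 2 * alpha0 b"

definition prodd :: "real^3 \<Rightarrow> 3 \<Rightarrow> real" where
  "prodd b i = (\<Prod>j\<in>UNIV - {i}. (b$i - b$j))"

definition vneg :: "real^3 \<Rightarrow> 3 \<Rightarrow> real" where
  "vneg b i = 2 / sqrt (b$1 * b$2 * b$3) * (1 - prodd b i / (b$i * (b$i + alpha1 b)))"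

definition Cch :: "real \<Rightarrow> real^3 \<Rightarrow> 3 \<Rightarrow> real" where
  "Cch \<nu> b i = 1 / b$1 + 1 / b$2 + 1 / b$3 - \<nu>
      + 2 * (alpha0 b * prodd b i) / (b$i * (b$i + alpha1 b))"

text \<open>beta solves the diagonal system d_s beta^i + V^i(beta) d_r beta^i = 0 on U,
  where points of the plane are (r, s) (space, time).\<close>
definition diag_solution ::
  "(real^3 \<Rightarrow> 3 \<Rightarrow> real) \<Rightarrow> (real \<times> real) set \<Rightarrow> (real \<times> real \<Rightarrow> real^3) \<Rightarrow> bool" where
  "diag_solution V U \<beta> \<longleftrightarrow>
     (\<forall>p\<in>U. \<exists>D. (\<beta> has_derivative D) (at p) \<and>
        (\<forall>i. D (0, 1) $ i + V (\<beta> p) i * D (1, 0) $ i = 0))"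

end

theory Submission
  imports Defs "HOL-Homology.Invariance_of_Domain"
begin

lemma arcsin_int:
  fixes p q :: real assumes "q < p"
  shows "((\<lambda>x. 1 / sqrt ((p - x) * (x - q))) has_integral pi) {q..p}"
proof -
  define A where "A x = arcsin ((2*x - p - q) / (p - q))" for x
  have "((\<lambda>x. 1 / sqrt ((p - x) * (x - q))) has_integral (A p - A q)) {q..p}"
  proof (rule fundamental_theorem_of_calculus_interior)
    show "q \<le> p" using assms by simp
    show "continuous_on {q..p} A" unfolding A_def
      using assms by (intro continuous_intros) (auto simp: field_simps)
    fix x assume x: "x \<in> {q<..<p}"
    define u where "u = (2*x - p - q) / (p - q)"
    have u1: "-1 < u" "u < 1" using x assms by (auto simp: u_def field_simps)
    have d: "((\<lambda>x. (2*x - p - q) / (p - q)) has_real_derivative 2 / (p - q)) (at x)"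
      using assms by (auto intro!: derivative_eq_intros) (simp add: divide_simps; algebra)
    have pos: "(p - x) * (x - q) > 0" using x by simp
    have e1: "(2 * sqrt ((p - x) * (x - q)) / (p - q))^2 = 4 * ((p - x) * (x - q)) / (p - q)^2"
      using pos by (simp add: power_divide power_mult_distrib)
    have e2: "1 - u^2 = 4 * ((p - x) * (x - q)) / (p - q)^2"
      using assms by (simp add: u_def power_divide divide_simps) (simp add: power2_eq_square algebra_simps)
    have "1 - u^2 = (2 * sqrt ((p - x) * (x - q)) / (p - q))^2"
      using e1 e2 by simp
    hence s: "sqrt (1 - u^2) = 2 * sqrt ((p - x) * (x - q)) / (p - q)"
      using x assms by simp
    have "(A has_real_derivative inverse (sqrt (1 - u^2)) * (2 / (p - q))) (at x)"
      unfolding A_def u_def using DERIV_chain2[OF DERIV_arcsin[OF u1[unfolded u_def]] d] .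
    moreover have "inverse (sqrt (1 - u^2)) * (2 / (p - q)) = 1 / sqrt ((p - x) * (x - q))"
    proof -
      have g: "\<And>S. S > 0 \<Longrightarrow> inverse (2*S/(p-q)) * (2/(p-q)) = 1/S"
        using assms by (simp add: field_simps)
      show ?thesis unfolding s by (rule g) (use pos in simp)
    qed
    ultimately show "(A has_vector_derivative 1 / sqrt ((p - x) * (x - q))) (at x)"
      by (simp add: has_real_derivative_iff_has_vector_derivative)
  qed
  moreover have "(q - p) / (p - q) = -1" using assms by (simp add: field_simps)
  hence "A p - A q = pi" using assms by (simp add: A_def arcsin_minus)
  ultimately show ?thesis by simp
qed

lemma key_int:
  fixes p q r m G :: real and g :: "real \<Rightarrow> real"
  assumes rq: "r < q" and qp: "q < p" and gc: "continuous_on {q<..<p} g"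
    and gb: "\<And>x. x \<in> {q<..<p} \<Longrightarrow> m \<le> g x \<and> g x \<le> G" and m0: "m > 0"
  shows "(\<lambda>x. g x / sqrt \<bar>(x-p)*(x-q)*(x-r)\<bar>) integrable_on {q..p} \<and>
         integral {q..p} (\<lambda>x. g x / sqrt \<bar>(x-p)*(x-q)*(x-r)\<bar>) > 0"
proof -
  define F where "F = (\<lambda>x. g x / sqrt \<bar>(x-p)*(x-q)*(x-r)\<bar>)"
  define h where "h = (\<lambda>x. 1 / sqrt ((p - x) * (x - q)))"
  define S where "S = {q<..<p}"
  have hi: "h integrable_on S"
    using arcsin_int[OF qp] unfolding h_def S_def integrable_on_open_interval_real
    by (auto simp: integrable_on_def)
  have PS: "\<And>x. x \<in> S \<Longrightarrow> \<bar>(x-p)*(x-q)*(x-r)\<bar> = (p - x) * (x - q) * (x - r)"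
  proof -
    fix x assume "x \<in> S"
    hence "(x-p)*(x-q)*(x-r) < 0" using rq unfolding S_def by (auto simp: mult_less_0_iff)
    thus "\<bar>(x-p)*(x-q)*(x-r)\<bar> = (p - x) * (x - q) * (x - r)" by (simp add: algebra_simps)
  qed
  have Fc: "continuous_on S F"
    unfolding F_def using gc S_def
    by (intro continuous_intros) (use rq in \<open>auto simp: S_def\<close>)
  have Fm: "F \<in> borel_measurable (lebesgue_on S)"
    by (rule continuous_imp_measurable_on_sets_lebesgue[OF Fc]) (auto simp: S_def)
  have G0: "G > 0" using gb[of "(p+q)/2"] m0 qp by auto
  have bound: "norm (F x) \<le> (G / sqrt (q - r)) * h x" if x: "x \<in> S" for x
  proof -
    have x1: "q < x" "x < p" using x by (auto simp: S_def)
    have a: "sqrt \<bar>(x-p)*(x-q)*(x-r)\<bar> = sqrt ((p - x) * (x - q)) * sqrt (x - r)"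
      using PS[OF x] by (simp add: real_sqrt_mult)
    have pos1: "sqrt ((p - x) * (x - q)) > 0" using x1 by simp
    have pos2: "sqrt (q - r) > 0" using rq by simp
    have le: "sqrt (q - r) \<le> sqrt (x - r)" using x1 by simp
    have "norm (F x) = g x / (sqrt ((p - x) * (x - q)) * sqrt (x - r))"
      using gb[OF x[unfolded S_def]] m0 pos1 pos2 le unfolding F_def a by simp
    also have "\<dots> \<le> G / (sqrt ((p - x) * (x - q)) * sqrt (q - r))"
      using gb[OF x[unfolded S_def]] m0 pos1 pos2 le
      by (intro frac_le) (auto intro: mult_left_mono)
    also have "\<dots> = (G / sqrt (q - r)) * h x" by (simp add: h_def)
    finally show ?thesis .
  qed
  have hi2: "(\<lambda>x. (G / sqrt (q - r)) * h x) integrable_on S"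
    using integrable_on_cmult_left[OF hi, of "G / sqrt (q - r)"] by simp
  have "F absolutely_integrable_on S"
    by (rule measurable_bounded_by_integrable_imp_absolutely_integrable[OF Fm _ hi2 bound])
       (auto simp: S_def)
  hence FiS: "F integrable_on S" using set_lebesgue_integral_eq_integral(1) by blast
  hence Fi: "F integrable_on {q..p}" unfolding S_def integrable_on_open_interval_real .
  define c where "c = m / sqrt ((p - q)^2 * (p - r))"
  have c0: "c > 0" using m0 qp rq by (simp add: c_def)
  have lower: "c \<le> F x" if x: "x \<in> S" for x
  proof -
    have x1: "q < x" "x < p" using x by (auto simp: S_def)
    have "(p - x) * (x - q) * (x - r) \<le> (p - q)^2 * (p - r)"
    proof -
      have "(p - x) * (x - q) \<le> (p - q) * (p - q)"
        using x1 by (intro mult_mono) auto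
      moreover have "x - r \<le> p - r" using x1 by simp
      ultimately show ?thesis using x1 rq
        by (simp add: power2_eq_square) (intro mult_mono, auto)
    qed
    hence le: "sqrt \<bar>(x-p)*(x-q)*(x-r)\<bar> \<le> sqrt ((p - q)^2 * (p - r))"
      using PS[OF x] by simp
    have pos: "sqrt \<bar>(x-p)*(x-q)*(x-r)\<bar> > 0" using PS[OF x] x1 rq by simp
    show ?thesis unfolding c_def F_def
      using gb[OF x[unfolded S_def]] m0 le pos by (intro frac_le) auto
  qed
  have "integral S (\<lambda>x. c) \<le> integral S F"
    by (rule integral_le) (use FiS lower in \<open>auto simp: S_def integrable_on_open_interval_real\<close>)
  moreover have "integral S (\<lambda>x. c) = c * (p - q)"
    using qp unfolding S_def integral_open_interval_real[symmetric] by simp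
  moreover have "integral {q..p} F = integral S F"
    unfolding S_def by (rule integral_open_interval_real)
  ultimately have "integral {q..p} F > 0" using c0 qp
    by (smt (verit) mult_pos_pos)
  with Fi show ?thesis unfolding F_def by simp
qed

lemma alpha0_neg:
  assumes adm: "admissible b"
  shows "alpha0 b < 0"
proof -
  define p q r where "p = b$1" and "q = b$2" and "r = b$3"
  have rq: "r < q" and qp: "q < p" and r0: "r > 0" using adm by (auto simp: admissible_def p_def q_def r_def)
  have Pw: "\<And>x. Pw b x = (x-p)*(x-q)*(x-r)" by (simp add: Pw_def p_def q_def r_def)
  define I0 where "I0 = integral {q..p} (\<lambda>x. 1 / sqrt \<bar>(x-p)*(x-q)*(x-r)\<bar>)"
  define I1 where "I1 = integral {q..p} (\<lambda>x. (1/x) / sqrt \<bar>(x-p)*(x-q)*(x-r)\<bar>)"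
  have k0: "(\<lambda>x. 1 / sqrt \<bar>(x-p)*(x-q)*(x-r)\<bar>) integrable_on {q..p} \<and> I0 > 0"
    unfolding I0_def by (rule key_int[OF rq qp, of "\<lambda>x. 1" 1 1]) auto
  have k1: "(\<lambda>x. (1/x) / sqrt \<bar>(x-p)*(x-q)*(x-r)\<bar>) integrable_on {q..p} \<and> I1 > 0"
    unfolding I1_def
  proof (rule key_int[OF rq qp, of "\<lambda>x. 1/x" "1/p" "1/q"])
    show "continuous_on {q<..<p} (\<lambda>x. 1 / x)" using rq r0
      by (intro continuous_intros) auto
    fix x assume "x \<in> {q<..<p}"
    thus "1/p \<le> 1/x \<and> 1/x \<le> 1/q" using rq r0 by (auto simp: field_simps)
  qed (use qp rq r0 in auto)
  have eq: "\<And>a. integral {q..p} (\<lambda>x. (1 / x + a) / sqrt \<bar>(x-p)*(x-q)*(x-r)\<bar>) = I1 + a * I0"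
  proof -
    fix a
    have "(\<lambda>x. (1 / x + a) / sqrt \<bar>(x-p)*(x-q)*(x-r)\<bar>) =
          (\<lambda>x. (1/x) / sqrt \<bar>(x-p)*(x-q)*(x-r)\<bar> + a * (1 / sqrt \<bar>(x-p)*(x-q)*(x-r)\<bar>))"
      by (simp add: add_divide_distrib)
    thus "integral {q..p} (\<lambda>x. (1 / x + a) / sqrt \<bar>(x-p)*(x-q)*(x-r)\<bar>) = I1 + a * I0"
      using integral_add[OF conjunct1[OF k1] integrable_on_cmult_left[OF conjunct1[OF k0], of a]]
        integral_mult_right[of "{q..p}" a "\<lambda>x. 1 / sqrt \<bar>(x-p)*(x-q)*(x-r)\<bar>"]
      unfolding I0_def I1_def by simp
  qed
  have "alpha0 b = - I1 / I0"
    unfolding alpha0_def Pw p_def[symmetric] q_def[symmetric] r_def[symmetric] eq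
    by (rule the_equality) (use k0 in \<open>auto simp: field_simps\<close>)
  thus ?thesis using k0 k1 by (simp add: divide_pos_pos)
qed

lemma transform:
  fixes U :: "(real \<times> real) set" and \<beta> :: "real \<times> real \<Rightarrow> real^3" and X :: "real \<times> real \<Rightarrow> real"
    and a c :: "real \<times> real \<Rightarrow> real" and V W :: "real^3 \<Rightarrow> 3 \<Rightarrow> real"
  assumes U: "open U"
    and dX: "\<forall>p\<in>U. (X has_derivative (\<lambda>(h, k). a p * h + c p * k)) (at p)"
    and a0: "\<forall>p\<in>U. a p \<noteq> 0"
    and inj: "inj_on (\<lambda>p. (X p, snd p)) U"
    and sol: "diag_solution V U \<beta>"
    and rel: "\<forall>p\<in>U. \<forall>i. W (\<beta> p) i = c p + a p * V (\<beta> p) i"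
  shows "open ((\<lambda>p. (X p, snd p)) ` U) \<and>
         diag_solution W ((\<lambda>p. (X p, snd p)) ` U) (\<beta> \<circ> inv_into U (\<lambda>p. (X p, snd p)))"
proof -
  define \<Phi> where "\<Phi> = (\<lambda>p::real\<times>real. (X p, snd p))"
  define T where "T = \<Phi> ` U"
  define \<Psi> where "\<Psi> = inv_into U \<Phi>"
  define \<Phi>' where "\<Phi>' p = (\<lambda>v::real\<times>real. ((\<lambda>(h, k). a p * h + c p * k) v, snd v))" for p
  have d\<Phi>: "(\<Phi> has_derivative \<Phi>' p) (at p)" if "p \<in> U" for p
    unfolding \<Phi>_def \<Phi>'_def using dX that
    by (intro has_derivative_Pair has_derivative_snd[OF has_derivative_ident]) auto
  have cont: "continuous_on U \<Phi>"
    using d\<Phi> has_derivative_continuous continuous_at_imp_continuous_on by blast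
  have injP: "inj_on \<Phi> U" using inj by (simp add: \<Phi>_def)
  have openT: "open T" unfolding T_def by (rule invariance_of_domain[OF cont U injP])
  have \<Psi>\<Phi>: "\<And>x. x \<in> U \<Longrightarrow> \<Psi> (\<Phi> x) = x" unfolding \<Psi>_def using injP by simp
  have contP: "continuous_on T \<Psi>" unfolding T_def
    by (rule continuous_on_inverse_open[OF U cont _ \<Psi>\<Phi>]) simp
  have sol': "diag_solution W T (\<beta> \<circ> \<Psi>)"
    unfolding diag_solution_def
  proof
    fix y assume yT: "y \<in> T"
    then obtain p where pU: "p \<in> U" and yp: "y = \<Phi> p" unfolding T_def by blast
    have \<Psi>y: "\<Psi> y = p" using \<Psi>\<Phi>[OF pU] yp by simp
    obtain D where dB: "(\<beta> has_derivative D) (at p)"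
      and eqD: "\<forall>i. D (0, 1) $ i + V (\<beta> p) i * D (1, 0) $ i = 0"
      using sol pU unfolding diag_solution_def by blast
    have ap: "a p \<noteq> 0" using a0 pU by blast
    define L where "L = (\<lambda>v::real\<times>real. ((fst v - c p * snd v) / a p, snd v))"
    have linL: "linear L" unfolding L_def
      by (rule linearI) (auto simp: algebra_simps add_divide_distrib diff_divide_distrib)
    have blL: "bounded_linear L" using linL by (simp add: linear_conv_bounded_linear)
    have LP: "L \<circ> \<Phi>' p = id"
      by (rule ext) (auto simp: L_def \<Phi>'_def ap split: prod.splits)
    have dP: "(\<Psi> has_derivative L) (at y)"
    proof (rule has_derivative_inverse_basic[where f=\<Phi> and T=T])
      show "(\<Phi> has_derivative \<Phi>' p) (at (\<Psi> y))" using d\<Phi>[OF pU] \<Psi>y by simp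
      show "isCont \<Psi> y" using contP openT yT continuous_on_eq_continuous_at by blast
      show "\<And>z. z \<in> T \<Longrightarrow> \<Phi> (\<Psi> z) = z" unfolding T_def using \<Psi>\<Phi> by auto
    qed (use blL LP openT yT in auto)
    have dC: "((\<beta> \<circ> \<Psi>) has_derivative D \<circ> L) (at y)"
      using diff_chain_at[OF dP] dB \<Psi>y by simp
    have linD: "linear D" using dB has_derivative_linear by blast
    have L10: "L (1, 0) = (1 / a p) *\<^sub>R (1, 0)" by (simp add: L_def)
    have L01: "L (0, 1) = (- c p / a p) *\<^sub>R (1, 0) + (0, 1)" by (simp add: L_def)
    have e1: "(D \<circ> L) (1, 0) = (1 / a p) *\<^sub>R D (1, 0)"
      by (simp only: comp_def L10 linear_cmul[OF linD])
    have e2: "(D \<circ> L) (0, 1) = (- c p / a p) *\<^sub>R D (1, 0) + D (0, 1)"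
      by (simp only: comp_def L01 linear_cmul[OF linD] linear_add[OF linD])
    have "\<forall>i. (D \<circ> L) (0, 1) $ i + W ((\<beta> \<circ> \<Psi>) y) i * (D \<circ> L) (1, 0) $ i = 0"
    proof
      fix i
      have "(D \<circ> L) (0, 1) $ i + W ((\<beta> \<circ> \<Psi>) y) i * (D \<circ> L) (1, 0) $ i
            = (- c p / a p) * D (1,0) $ i + D (0,1) $ i + (c p + a p * V (\<beta> p) i) * ((1 / a p) * D (1, 0) $ i)"
        using rel pU \<Psi>y e1 e2 by simp
      also have "\<dots> = D (0, 1) $ i + V (\<beta> p) i * D (1, 0) $ i"
        using ap by (simp add: field_simps)
      finally show "(D \<circ> L) (0, 1) $ i + W ((\<beta> \<circ> \<Psi>) y) i * (D \<circ> L) (1, 0) $ i = 0"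
        using eqD by simp
    qed
    with dC show "\<exists>D. ((\<beta> \<circ> \<Psi>) has_derivative D) (at y) \<and>
        (\<forall>i. D (0, 1) $ i + W ((\<beta> \<circ> \<Psi>) y) i * D (1, 0) $ i = 0)" by blast
  qed
  show ?thesis using openT sol' unfolding T_def \<Psi>_def \<Phi>_def by simp
qed

theorem proposition5:
  fixes \<nu> :: real
  shows
  "(\<forall>(U :: (real \<times> real) set) (\<beta> :: real \<times> real \<Rightarrow> real^3) (X :: real \<times> real \<Rightarrow> real).
      open U \<and> (\<forall>p\<in>U. admissible (\<beta> p)) \<and> diag_solution vneg U \<beta> \<and>
      (\<forall>p\<in>U. (X has_derivative (\<lambda>(h, k). H0 (\<beta> p) * h + NN \<nu> (\<beta> p) * k)) (at p)) \<and>
      inj_on (\<lambda>p. (X p, snd p)) U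
      \<longrightarrow> open ((\<lambda>p. (X p, snd p)) ` U) \<and>
          diag_solution (Cch \<nu>) ((\<lambda>p. (X p, snd p)) ` U)
            (\<beta> \<circ> inv_into U (\<lambda>p. (X p, snd p))))
   \<and>
   (\<forall>(V :: (real \<times> real) set) (\<beta> :: real \<times> real \<Rightarrow> real^3) (Y :: real \<times> real \<Rightarrow> real).
      open V \<and> (\<forall>p\<in>V. admissible (\<beta> p)) \<and> diag_solution (Cch \<nu>) V \<beta> \<and>
      (\<forall>p\<in>V. (Y has_derivative
          (\<lambda>(h, k). (1 / H0 (\<beta> p)) * h - (NN \<nu> (\<beta> p) / H0 (\<beta> p)) * k)) (at p)) \<and>
      inj_on (\<lambda>p. (Y p, snd p)) V
      \<longrightarrow> open ((\<lambda>p. (Y p, snd p)) ` V) \<and>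
          diag_solution vneg ((\<lambda>p. (Y p, snd p)) ` V)
            (\<beta> \<circ> inv_into V (\<lambda>p. (Y p, snd p))))"
proof -
  have H0nz: "H0 b \<noteq> 0" if "admissible b" for b
  proof -
    have "sqrt (b$1 * b$2 * b$3) > 0" using that by (simp add: admissible_def)
    moreover have "alpha0 b \<noteq> 0" using alpha0_neg[OF that] by simp
    ultimately show ?thesis unfolding H0_def by (metis mult_eq_0_iff neg_equal_0_iff_equal less_irrefl)
  qed
  have relC: "Cch \<nu> b i = NN \<nu> b + H0 b * vneg b i" if "admissible b" for b i
  proof -
    have "sqrt (b$1 * b$2 * b$3) > 0" using that by (simp add: admissible_def)
    hence sn: "sqrt (b$1 * b$2 * b$3) \<noteq> 0" by (metis less_irrefl)
    have gen: "\<And>S A P Q :: real. S \<noteq> 0 \<Longrightarrow> 2 * (A * P) / Q = 2 * A + (- S * A) * (2 / S * (1 - P / Q))"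
    proof -
      fix S A P Q :: real assume "S \<noteq> 0"
      thus "2 * (A * P) / Q = 2 * A + (- S * A) * (2 / S * (1 - P / Q))"
        by (cases "Q = 0") (simp_all add: field_simps)
    qed
    show ?thesis unfolding Cch_def NN_def H0_def vneg_def using gen[OF sn] by simp
  qed
  show ?thesis
  proof (rule conjI; intro allI impI; elim conjE)
    fix U :: "(real \<times> real) set" and \<beta> :: "real \<times> real \<Rightarrow> real^3" and X :: "real \<times> real \<Rightarrow> real"
    assume U: "open U" and adm: "\<forall>p\<in>U. admissible (\<beta> p)" and sol: "diag_solution vneg U \<beta>"
      and dX: "\<forall>p\<in>U. (X has_derivative (\<lambda>(h, k). H0 (\<beta> p) * h + NN \<nu> (\<beta> p) * k)) (at p)"
      and inj: "inj_on (\<lambda>p. (X p, snd p)) U"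
    show "open ((\<lambda>p. (X p, snd p)) ` U) \<and>
          diag_solution (Cch \<nu>) ((\<lambda>p. (X p, snd p)) ` U) (\<beta> \<circ> inv_into U (\<lambda>p. (X p, snd p)))"
      by (rule transform[OF U _ _ inj sol, where a="\<lambda>p. H0 (\<beta> p)" and c="\<lambda>p. NN \<nu> (\<beta> p)"])
         (use dX adm H0nz relC in auto)
  next
    fix V :: "(real \<times> real) set" and \<beta> :: "real \<times> real \<Rightarrow> real^3" and Y :: "real \<times> real \<Rightarrow> real"
    assume U: "open V" and adm: "\<forall>p\<in>V. admissible (\<beta> p)" and sol: "diag_solution (Cch \<nu>) V \<beta>"
      and dY: "\<forall>p\<in>V. (Y has_derivative
          (\<lambda>(h, k). (1 / H0 (\<beta> p)) * h - (NN \<nu> (\<beta> p) / H0 (\<beta> p)) * k)) (at p)"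
      and inj: "inj_on (\<lambda>p. (Y p, snd p)) V"
    have eqf: "(\<lambda>(h, k). (1 / H0 (\<beta> p)) * h - (NN \<nu> (\<beta> p) / H0 (\<beta> p)) * k) =
               (\<lambda>(h, k). (1 / H0 (\<beta> p)) * h + (- (NN \<nu> (\<beta> p) / H0 (\<beta> p))) * k)" for p
      by (auto simp: fun_eq_iff)
    have dY': "\<forall>p\<in>V. (Y has_derivative
          (\<lambda>(h, k). (1 / H0 (\<beta> p)) * h + (- (NN \<nu> (\<beta> p) / H0 (\<beta> p))) * k)) (at p)"
      using dY unfolding eqf .
    have rel: "\<forall>p\<in>V. \<forall>i. vneg (\<beta> p) i = - (NN \<nu> (\<beta> p) / H0 (\<beta> p)) + (1 / H0 (\<beta> p)) * Cch \<nu> (\<beta> p) i"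
    proof (intro ballI allI)
      fix p i assume "p \<in> V"
      hence a: "admissible (\<beta> p)" using adm by blast
      show "vneg (\<beta> p) i = - (NN \<nu> (\<beta> p) / H0 (\<beta> p)) + (1 / H0 (\<beta> p)) * Cch \<nu> (\<beta> p) i"
        unfolding relC[OF a] using H0nz[OF a] by (simp add: field_simps)
    qed
    show "open ((\<lambda>p. (Y p, snd p)) ` V) \<and>
          diag_solution vneg ((\<lambda>p. (Y p, snd p)) ` V) (\<beta> \<circ> inv_into V (\<lambda>p. (Y p, snd p)))"
      by (rule transform[OF U dY' _ inj sol rel]) (use adm H0nz in auto)
  qed
qed

end
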